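(* Let $N\in\mathbb{N}$, $T>0$, $\underline t\ge0$, $\overline t=\underline t+NT$, $t_k=\underline t+kT$, let $\mathbf x_0,\dots,\mathbf x_N\in\mathbb{R}^n$ and let $\mathbf x_d$ be the associated Bézier trajectory with Bézier curves $r_k$ and control points $(\boldsymbol\zeta_k)_i$, $(\xi_k)_{n,i}$ (context). Let $\alpha,\beta\ge0$, $u_{\max}>0$, and let $\overline{\mathbf x}_0,\dots,\overline{\mathbf x}_{N-1}\in\mathcal X$. Suppose that for each $k=0,\dots,N-1$ there exists $\mathbf s_k\in\mathbb{R}^2_{\ge0}$ such that, for all $i=0,\dots,2n-1$, $$\begin{bmatrix}\|(\boldsymbol\zeta_k)_i-\overline{\mathbf x}_k\|_2\\ |(\xi_k)_{n,i}-f(\overline{\mathbf x}_k)|\end{bmatrix}\le\mathbf s_k\ \text{(elementwise)},\qquad \tfrac12\mathbf s_k^\top M_{\alpha,\beta}\mathbf s_k+N_{\alpha,\beta}(\overline{\mathbf x}_k)^\top\mathbf s_k+\Gamma_{\alpha,\beta}(\overline{\mathbf x}_k)\le u_{\max}.$$ Then for every $k$ and every $t\in[t_k,t_{k+1})$, $$\tfrac12\boldsymbol\sigma_{\mathbf x_d}(t)^\top M_{\alpha,\beta}\boldsymbol\sigma_{\mathbf x_d}(t)+N_{\alpha,\beta}(\overline{\mathbf x}_k)^\top\boldsymbol\sigma_{\mathbf x_d}(t)+\Gamma_{\alpha,\beta}(\overline{\mathbf x}_k)\le u_{\max},$$ where $\boldsymbol\sigma_{\mathbf x_d}(t)=\big(\|\mathbf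 x_d(t)-\overline{\mathbf x}_k\|_2,\ |r_k^{(n)}(t-t_k)-f(\overline{\mathbf x}_k)|\big)^\top$ for $t\in[t_k,t_{k+1})$ (note $r_k^{(n)}(t-t_k)$ is the last component of $\dot{\mathbf x}_d(t)$, right derivative at $t_k$).
   Context: $f,g:\mathbb{R}^n\to\mathbb{R}$ are continuously differentiable, $f(\mathbf 0)=0$, $g(\mathbf x)\ne0$ for all $\mathbf x$; $\mathcal X\subset\mathbb{R}^n$ is a compact convex polytope containing $\mathbf 0$ in its interior. $\mathbf K\in\mathbb{R}^n$ makes $F=A_0-e_n\mathbf K^\top$ Hurwitz ($A_0$ the $n\times n$ matrix with ones on the superdiagonal and zeros elsewhere, $e_n$ last basis vector); $Q\succ0$, $P\succ0$ solves $F^\top P+PF=-Q$, $\gamma=4\lambda_{\max}(P)^3/\lambda_{\min}(Q)^2$, $\overline w\ge0$, $\overline e=\sqrt{\gamma\overline w^2/\lambda_{\min}(P)}$. $M_{\alpha,\beta}=\pi_{\rm PSD}\!\left(\begin{bmatrix}2\alpha\beta&\beta\\\beta&0\end{bmatrix}\right)$ ($\pi_{\rm PSD}$: projection onto the PSD cone, zeroing negative eigenvalues); $N_{\alpha,\beta}(\overline{\mathbf x})=\big(2\alpha\beta\overline e+\alpha|g(\overline{\mathbf x})^{-1}|+\beta\|\mathbf K\|_2\overline e,\ |g(\overline{\mathbf x})^{-1}|+\beta\overline e\big)^\top$; $\Gamma_{\alpha,\beta}(\overline{\mathbf x})=\overline e(\beta\overline e+|g(\overline{\mathbf x})^{-1}|)(\alpha+\|\mathbf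 K\|_2)$. Bézier trajectory: with $z_i(\tau)=\binom{p}{i}(\tau/T)^i(1-\tau/T)^{p-i}$, a Bézier curve of order $p$ is $r=\boldsymbol\xi_0^\top\mathbf z$; with $S\in\mathbb{R}^{p\times(p+1)}$ ($S_{ii}=-p$, $S_{i,i+1}=p$), $R\in\mathbb{R}^{(p+1)\times p}$ ($R_{ii}=(p+1-i)/p$, $R_{i+1,i}=i/p$), other entries zero, $H=S^\top R^\top$, one has $r^{(j)}=\boldsymbol\xi_j^\top\mathbf z$ with $\boldsymbol\xi_j=T^{-j}(H^\top)^j\boldsymbol\xi_0$. For $k=0,\dots,N-1$, $r_k$ is the unique order-$(2n-1)$ Bézier curve with $r_k^{(j-1)}(0)=x_k^j$, $r_k^{(j-1)}(T)=x_{k+1}^j$, $j=1,\dots,n$; its control vectors are $(\boldsymbol\xi_k)_j$ with entries $(\xi_k)_{j,i}$, $i=0,\dots,2n-1$; $(\boldsymbol\zeta_k)_i=((\xi_k)_{0,i},\dots,(\xi_k)_{n-1,i})^\top$; $\mathbf r_k=(r_k,\dots,r_k^{(n-1)})^\top$; $\mathbf x_d(t)=\mathbf r_k(t-t_k)$ on $[t_k,t_{k+1})$, $\mathbf x_d(\overline t)=\mathbf x_N$. *)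

theory Defs
  imports "HOL-Analysis.Analysis"
begin

text \<open>R^n is rendered as real^'n with CARD('n) = n; the linear order on the index
type fixes which coordinate is the j-th one: coordinate c is number cpos c (0-based).\<close>

definition cpos :: "'n::{finite,linorder} \<Rightarrow> nat" where
  "cpos c = card {c'. c' < c}"

definition sym_mat :: "real^'n^'n \<Rightarrow> bool" where
  "sym_mat A \<longleftrightarrow> transpose A = A"

definition pos_def :: "real^'n^'n \<Rightarrow> bool" where
  "pos_def A \<longleftrightarrow> sym_mat A \<and> (\<forall>x. x \<noteq> 0 \<longrightarrow> 0 < x \<bullet> (A *v x))"

definition psd_cone :: "(real^'n^'n) set" where
  "psd_cone = {B. sym_mat B \<and> (\<forall>x. 0 \<le> x \<bullet> (B *v x))}"

text \<open>Projection onto the PSD cone (nearest point in Frobenius norm, which is the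
norm of real^'n^'n).\<close>
definition psd_proj :: "real^'n^'n \<Rightarrow> real^'n^'n" where
  "psd_proj A = (THE B. B \<in> psd_cone \<and> (\<forall>C\<in>psd_cone. dist A B \<le> dist A C))"

definition real_eigs :: "real^'n^'n \<Rightarrow> real set" where
  "real_eigs A = {l. \<exists>v. v \<noteq> 0 \<and> A *v v = l *\<^sub>R v}"

definition lam_max :: "real^'n^'n \<Rightarrow> real" where
  "lam_max A = Max (real_eigs A)"

definition lam_min :: "real^'n^'n \<Rightarrow> real" where
  "lam_min A = Min (real_eigs A)"

definition hurwitz :: "real^'n^'n \<Rightarrow> bool" where
  "hurwitz A \<longleftrightarrow> (\<forall>(l::complex) (v::complex^'n). v \<noteq> 0 \<and>
      (\<forall>i. (\<Sum>j\<in>UNIV. complex_of_real (A$i$j) * v$j) = l * v$i) \<longrightarrow> Re l < 0)"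

definition A0 :: "real^('n::{finite,linorder})^('n::{finite,linorder})" where
  "A0 = (\<chi> i j. if cpos j = cpos i + 1 then 1 else 0)"

definition e_last :: "real^'n::{finite,linorder}" where
  "e_last = (\<chi> i. if cpos i = CARD('n) - 1 then 1 else 0)"

definition Fmat :: "real^('n::{finite,linorder}) \<Rightarrow> real^('n::{finite,linorder})^('n::{finite,linorder})" where
  "Fmat K = A0 - (\<chi> i j. e_last$i * K$j)"

definition C1 :: "(real^'n \<Rightarrow> real) \<Rightarrow> bool" where
  "C1 f \<longleftrightarrow> (\<exists>G. (\<forall>x. (f has_derivative (\<lambda>h. G x \<bullet> h)) (at x)) \<and> continuous_on UNIV G)"

definition gam :: "real^'n^'n \<Rightarrow> real^'n^'n \<Rightarrow> real" where
  "gam P Q = 4 * lam_max P ^ 3 / lam_min Q ^ 2"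

definition ebar :: "real^'n^'n \<Rightarrow> real^'n^'n \<Rightarrow> real \<Rightarrow> real" where
  "ebar P Q wb = sqrt (gam P Q * wb^2 / lam_min P)"

definition Mab :: "real \<Rightarrow> real \<Rightarrow> real^2^2" where
  "Mab a b = psd_proj (vector [vector [2*a*b, b], vector [b, 0]])"

definition Nab :: "real \<Rightarrow> real \<Rightarrow> real \<Rightarrow> real \<Rightarrow> real \<Rightarrow> real^2" where
  \<comment> \<open>arguments: alpha beta e-bar norm(K) g(xbar)\<close>
  "Nab a b e nK gx = vector [2*a*b*e + a * \<bar>inverse gx\<bar> + b * nK * e, \<bar>inverse gx\<bar> + b*e]"

definition Gab :: "real \<Rightarrow> real \<Rightarrow> real \<Rightarrow> real \<Rightarrow> real \<Rightarrow> real" where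
  "Gab a b e nK gx = e * (b*e + \<bar>inverse gx\<bar>) * (a + nK)"

definition quadf :: "real^2^2 \<Rightarrow> real^2 \<Rightarrow> real \<Rightarrow> real^2 \<Rightarrow> real" where
  "quadf M Nv G s = (1/2) * (s \<bullet> (M *v s)) + Nv \<bullet> s + G"

definition bern :: "nat \<Rightarrow> real \<Rightarrow> nat \<Rightarrow> real \<Rightarrow> real" where
  "bern p T i \<tau> = real (p choose i) * (\<tau>/T)^i * (1 - \<tau>/T)^(p-i)"

definition bez :: "nat \<Rightarrow> real \<Rightarrow> (nat \<Rightarrow> real) \<Rightarrow> real \<Rightarrow> real" where
  "bez p T c \<tau> = (\<Sum>i\<le>p. c i * bern p T i \<tau>)"

text \<open>S (p x (p+1)) and R ((p+1) x p), 0-based indices.\<close>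
definition Sm :: "nat \<Rightarrow> nat \<Rightarrow> nat \<Rightarrow> real" where
  "Sm p a b = (if b = a then - real p else if b = a + 1 then real p else 0)"

definition Rm :: "nat \<Rightarrow> nat \<Rightarrow> nat \<Rightarrow> real" where
  "Rm p a b = (if a = b then real (p - a) / real p else if a = b + 1 then real a / real p else 0)"

text \<open>bez_ctrl p T c j = xi_j = T^-j (H^T)^j c, with H^T = R S.\<close>
fun bez_ctrl :: "nat \<Rightarrow> real \<Rightarrow> (nat \<Rightarrow> real) \<Rightarrow> nat \<Rightarrow> nat \<Rightarrow> real" where
  "bez_ctrl p T c 0 = c"
| "bez_ctrl p T c (Suc j) =
     (\<lambda>a. (\<Sum>m<p. Rm p a m * (\<Sum>l\<le>p. Sm p m l * bez_ctrl p T c j l)) / T)"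

definition rvec :: "nat \<Rightarrow> real \<Rightarrow> (nat \<Rightarrow> real) \<Rightarrow> real \<Rightarrow> real^'n::{finite,linorder}" where
  "rvec p T c \<tau> = (\<chi> i. (deriv ^^ cpos i) (bez p T c) \<tau>)"

definition zeta :: "nat \<Rightarrow> real \<Rightarrow> (nat \<Rightarrow> real) \<Rightarrow> nat \<Rightarrow> real^'n::{finite,linorder}" where
  "zeta p T c i = (\<chi> j. bez_ctrl p T c (cpos j) i)"

text \<open>Desired trajectory x_d on [t_lo, t_lo + N T]; xi k is the control vector xi_{k,0} of r_k.\<close>
definition xd :: "nat \<Rightarrow> real \<Rightarrow> real \<Rightarrow> (nat \<Rightarrow> real^'n::{finite,linorder}) \<Rightarrow> (nat \<Rightarrow> nat \<Rightarrow> real)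
    \<Rightarrow> real \<Rightarrow> real^('n::{finite,linorder})" where
  "xd N T tlo xs xi t =
     (if t \<ge> tlo + real N * T then xs N
      else (let k = nat \<lfloor>(t - tlo) / T\<rfloor> in
            rvec (2 * CARD('n) - 1) T (xi k) (t - (tlo + real k * T))))"

end

theory Submission
  imports Defs
begin

lemma maxmin_bad: "\<not> (finite A \<and> A \<noteq> {}) \<Longrightarrow> Max (A::real set) = Min A"
  by (auto simp: Max.infinite Min.infinite Max.eq_fold' Min.eq_fold')

lemma pd_eigs_pos: assumes "pos_def P" "l \<in> real_eigs P" shows "l > 0"
proof -
  obtain v where v: "v \<noteq> 0" "P *v v = l *\<^sub>R v" using assms(2) unfolding real_eigs_def by auto
  have "0 < v \<bullet> (P *v v)" using assms(1) v unfolding pos_def_def by auto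
  also have "\<dots> = l * (v \<bullet> v)" using v by simp
  finally show ?thesis using v using inner_ge_zero[of v] by (auto simp: zero_less_mult_iff)
qed

lemma ebar_nn: assumes "pos_def P" shows "ebar P Q wb \<ge> 0"
proof -
  have "gam P Q * wb^2 / lam_min P \<ge> 0"
  proof (cases "finite (real_eigs P) \<and> real_eigs P \<noteq> {}")
    case True
    hence "lam_max P > 0" "lam_min P > 0" using pd_eigs_pos[OF assms] Max_in Min_in
      unfolding lam_max_def lam_min_def by auto
    thus ?thesis unfolding gam_def by simp
  next
    case False
    hence "lam_max P = lam_min P" unfolding lam_max_def lam_min_def using maxmin_bad by auto
    thus ?thesis unfolding gam_def 
      by (cases "lam_min P = 0") (simp_all add: power3_eq_cube power2_eq_square, intro divide_nonneg_nonneg, simp_all, metis mult.assoc mult.commute zero_le_square)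
  qed
  thus ?thesis unfolding ebar_def by simp
qed


lemma dist22: "(dist (X::real^2^2) Y)^2 = (X$1$1-Y$1$1)^2 + (X$1$2-Y$1$2)^2 + (X$2$1-Y$2$1)^2 + (X$2$2-Y$2$2)^2"
  by (simp only: dist_norm power2_norm_eq_inner) (simp add: inner_vec_def sum_2 power2_eq_square)

lemma quad22: "(x::real^2) \<bullet> (C *v x) = x$1*x$1*C$1$1 + x$1*x$2*(C$1$2 + C$2$1) + x$2*x$2*C$2$2"
  by (simp add: inner_vec_def matrix_vector_mult_def sum_2 algebra_simps)

lemma vec22_eq: "((X::real^2^2) = Y) \<longleftrightarrow> X$1$1 = Y$1$1 \<and> X$1$2 = Y$1$2 \<and> X$2$1 = Y$2$1 \<and> X$2$2 = Y$2$2"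
  by (auto simp: vec_eq_iff forall_2)

lemma sq3: "((a::real)-c)^2 = (a-m)^2 + (m-c)^2 + 2*((a-m)*(m-c))" by algebra
lemma aux44: "(d::real)>0 \<Longrightarrow> 2*((-xa*xa/d)*(ua*ua/d - c11) + (-xa*xc/d)*(ua*ub/d - c12) + (-xa*xc/d)*(ua*ub/d - c21) + (-xc*xc/d)*(ub*ub/d - c22)) = 2*((xa*xa*c11 + xa*xc*(c12+c21) + xc*xc*c22)/d - (ua*xa+ub*xc)^2/d^2)"
  by (simp add: field_simps power2_eq_square)
lemma auxc6: "(d::real)>0 \<Longrightarrow> y1*y1*(ua*ua/d) + y1*y2*(ua*ub/d + ua*ub/d) + y2*y2*(ub*ub/d) = (y1*ua + y2*ub)^2/d"
  by (simp add: field_simps power2_eq_square)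

lemma psd_proj_2:
  fixes A M :: "real^2^2" and ua ub xa xc d :: real
  assumes M: "M$1$1 = ua*ua/d" "M$1$2 = ua*ub/d" "M$2$1 = ua*ub/d" "M$2$2 = ub*ub/d"
    and A: "A$1$1 = (ua*ua - xa*xa)/d" "A$1$2 = (ua*ub - xa*xc)/d" "A$2$1 = (ua*ub - xa*xc)/d"
           "A$2$2 = (ub*ub - xc*xc)/d"
    and ux: "ua*xa + ub*xc = 0" and d: "d > 0"
  shows "psd_proj A = M"
proof -
  have Mpsd: "M \<in> psd_cone"
  proof -
    have "sym_mat M" unfolding sym_mat_def by (simp add: vec22_eq transpose_def M)
    moreover have "0 \<le> y \<bullet> (M *v y)" for y
    proof -
      have "y \<bullet> (M *v y) = (y$1*ua + y$2*ub)^2 / d"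
        unfolding quad22 M using d by (rule auxc6)
      thus ?thesis using d by simp
    qed
    ultimately show ?thesis unfolding psd_cone_def by auto
  qed
  have key: "(dist A C)^2 \<ge> (dist A M)^2 + (dist M C)^2" if C: "C \<in> psd_cone" for C
  proof -
    have sym: "C$1$2 = C$2$1" using C unfolding psd_cone_def sym_mat_def
    proof -
      have "transpose C = C" using C by (simp add: psd_cone_def sym_mat_def)
      hence "transpose C $1$2 = C$1$2" by simp
      thus ?thesis by (simp add: transpose_def)
    qed
    have q: "0 \<le> (vector [xa,xc]::real^2) \<bullet> (C *v vector [xa,xc])" using C unfolding psd_cone_def by auto
    hence q': "0 \<le> xa*xa*C$1$1 + xa*xc*(C$1$2 + C$2$1) + xc*xc*C$2$2" unfolding quad22 by simp
    have e1: "A$1$1 - M$1$1 = - xa*xa/d" "A$1$2 - M$1$2 = - xa*xc/d" "A$2$1 - M$2$1 = - xa*xc/d"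
      "A$2$2 - M$2$2 = - xc*xc/d" by (simp_all add: A M diff_divide_distrib)
    have "(dist A C)^2 - (dist A M)^2 - (dist M C)^2 =
       2*((A$1$1 - M$1$1)*(M$1$1-C$1$1) + (A$1$2 - M$1$2)*(M$1$2-C$1$2) + (A$2$1 - M$2$1)*(M$2$1-C$2$1)
         + (A$2$2 - M$2$2)*(M$2$2-C$2$2))"
      unfolding dist22 sq3[of "A$1$1" "C$1$1" "M$1$1"] sq3[of "A$1$2" "C$1$2" "M$1$2"]
        sq3[of "A$2$1" "C$2$1" "M$2$1"] sq3[of "A$2$2" "C$2$2" "M$2$2"] by (simp add: dist_commute algebra_simps)
    also have "\<dots> = 2*((xa*xa*C$1$1 + xa*xc*(C$1$2 + C$2$1) + xc*xc*C$2$2)/d - (ua*xa + ub*xc)^2/d^2)"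
      unfolding e1 using d by (simp only: M aux44)
    also have "\<dots> \<ge> 0" unfolding ux using q' d by simp
    finally show ?thesis by simp
  qed
  show ?thesis unfolding psd_proj_def
  proof (rule the_equality)
    show "M \<in> psd_cone \<and> (\<forall>C\<in>psd_cone. dist A M \<le> dist A C)"
    proof (intro conjI ballI Mpsd)
      fix C :: "real^2^2" assume "C \<in> psd_cone"
      from key[OF this] have "(dist A M)^2 \<le> (dist A C)^2" by (smt (verit) zero_le_power2)
      thus "dist A M \<le> dist A C" by (rule power2_le_imp_le) simp
    qed
  next
    fix B assume B: "B \<in> psd_cone \<and> (\<forall>C\<in>psd_cone. dist A B \<le> dist A C)"
    hence "dist A B \<le> dist A M" using Mpsd by auto
    hence "(dist A B)^2 \<le> (dist A M)^2" by (simp add: power_mono)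
    with key[of B] B have "(dist M B)^2 \<le> 0" by linarith
    thus "B = M" by simp
  qed
qed


lemma A22_entries: "(vector [vector [p, q], vector [r, s]] :: real^2^2) $1$1 = p"
  "(vector [vector [p, q], vector [r, s]] :: real^2^2) $1$2 = q"
  "(vector [vector [p, q], vector [r, s]] :: real^2^2) $2$1 = r"
  "(vector [vector [p, q], vector [r, s]] :: real^2^2) $2$2 = s"
  by simp_all

lemma Mab_props:
  assumes a: "a \<ge> 0" and b: "b \<ge> 0"
  shows "0 \<le> Mab a b $1$1 \<and> 0 \<le> Mab a b $1$2 \<and> Mab a b $2$1 = Mab a b $1$2 \<and> 0 \<le> Mab a b $2$2"
proof (cases "b = 0")
  case True
  have "psd_proj (vector [vector [2*a*b, b], vector [b, 0]] :: real^2^2) = 0"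
    by (rule psd_proj_2[where ua=0 and ub=0 and xa=0 and xc=0 and d=1]) (simp_all add: True)
  thus ?thesis unfolding Mab_def by simp
next
  case False
  hence bp: "b > 0" using b by simp
  define aa where "aa = 2*a*b"
  have aa: "aa \<ge> 0" using a b by (simp add: aa_def)
  define d where "d = sqrt (aa^2 + 4*b^2)"
  have dp: "d > 0" using bp unfolding d_def by (simp add: add_nonneg_pos)
  have dsq: "d^2 = aa^2 + 4*b^2" unfolding d_def by (simp add: add_nonneg_nonneg)
  define lp where "lp = (aa + d)/2"
  define lm where "lm = (aa - d)/2"
  have lp: "lp \<ge> 0" using aa dp by (simp add: lp_def)
  define M :: "real^2^2" where "M = vector [vector [lp*lp/d, lp*b/d], vector [lp*b/d, b*b/d]]"
  have "psd_proj (vector [vector [aa, b], vector [b, 0]] :: real^2^2) = M"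
  proof (rule psd_proj_2[where ua=lp and ub=b and xa=lm and xc=b and d=d])
    show "(vector [vector [aa, b], vector [b, 0]] :: real^2^2) $1$1 = (lp*lp - lm*lm)/d"
      using dp by (simp add: lp_def lm_def field_simps)
    show "(vector [vector [aa, b], vector [b, 0]] :: real^2^2) $1$2 = (lp*b - lm*b)/d"
      using dp by (simp add: lp_def lm_def field_simps)
    show "(vector [vector [aa, b], vector [b, 0]] :: real^2^2) $2$1 = (lp*b - lm*b)/d"
      using dp by (simp add: lp_def lm_def field_simps)
    show "lp * lm + b * b = 0" using dsq unfolding lp_def lm_def by (simp add: field_simps power2_eq_square)
  qed (simp_all add: M_def dp)
  hence "Mab a b = M" unfolding Mab_def aa_def by simp
  thus ?thesis using lp bp dp by (simp add: M_def)
qed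


lemma binom_shift_nat: "Suc a * (Suc q choose Suc a) = (Suc q - a) * (Suc q choose a)"
  by (metis Suc_times_binomial_eq binomial_absorb_comp diff_Suc_1 mult.commute)

lemma binom_shift: "real (Suc a) * real (Suc q choose Suc a) = real (Suc q - a) * real (Suc q choose a)"
  using binom_shift_nat[of a q] by (metis of_nat_mult)

lemma re4: "(u::real) * r = w*z \<Longrightarrow> c*u * r*X*Y = w*c*(z*X*Y)"
proof -
  assume h: "u * r = w*z"
  have "c*u * r*X*Y = c*(u * r)*X*Y" by (simp add: mult.assoc)
  also have "\<dots> = c*(w*z)*X*Y" using h by simp
  finally show ?thesis by (simp add: mult_ac)
qed

lemma binom_shift2: "a \<le> q \<Longrightarrow> (1 + real a) * real (Suc q choose Suc a) = (1 + real q - real a) * real (Suc q choose a)"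
  using binom_shift[of a q] by (simp add: of_nat_diff del: binomial_Suc_Suc)

lemma re5: "(u::real) * r = w*z \<Longrightarrow> X = X' \<Longrightarrow> Y = Y' \<Longrightarrow> u*cc*(r*X*Y) = w*r'*cc*X'*Y'" if "r' = z"
  using that by (simp add: mult_ac)

lemma bern_identity:
  fixes c :: "nat \<Rightarrow> real" and x y :: real and q :: nat
  assumes xy: "x + y = 1"
  defines "p \<equiv> Suc q"
  shows "(\<Sum>i\<le>p. c i * (real (p choose i) * (real i * x^(i-1) * y^(p-i) - real (p-i) * x^i * y^(p-i-1))))
       = (\<Sum>a\<le>p. (real (p-a) * (c (Suc a) - c a) + real a * (c a - c (a-1))) * (real (p choose a) * x^a * y^(p-a)))"
proof -
  let ?B = "\<lambda>a. real (p choose a) * x^a * y^(p-a)"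
  have S1: "(\<Sum>a\<le>p. real (p-a) * c (Suc a) * ?B a) = (\<Sum>i\<le>p. c i * real i * real (p choose i) * x^(i-1) * y^(p-i+1))"
  proof -
    have "(\<Sum>i\<le>p. c i * real i * real (p choose i) * x^(i-1) * y^(p-i+1))
        = (\<Sum>a\<le>q. c (Suc a) * real (Suc a) * real (p choose Suc a) * x^a * y^(p-a))"
      unfolding p_def sum.atMost_Suc_shift by (simp add: Suc_diff_le)
    also have "\<dots> = (\<Sum>a\<le>q. real (p-a) * c (Suc a) * ?B a)"
      unfolding p_def by (intro sum.cong refl re4 binom_shift)
    also have "\<dots> = (\<Sum>a\<le>p. real (p-a) * c (Suc a) * ?B a)"
      unfolding p_def by (simp add: sum.atMost_Suc)
    finally show ?thesis by simp
  qed
  have S3: "(\<Sum>a\<le>p. real a * c (a-1) * ?B a) = (\<Sum>i\<le>p. real (p-i) * real (p choose i) * c i * x^(i+1) * y^(p-i-1))"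
  proof -
    have "(\<Sum>a\<le>p. real a * c (a-1) * ?B a) = (\<Sum>a\<le>q. real (Suc a) * c a * ?B (Suc a))"
      unfolding p_def sum.atMost_Suc_shift by simp
    also have "\<dots> = (\<Sum>i\<le>q. real (p-i) * real (p choose i) * c i * x^(i+1) * y^(p-i-1))"
      unfolding p_def by (intro sum.cong refl re5) (simp_all del: binomial_Suc_Suc add: binom_shift2)
    also have "\<dots> = (\<Sum>i\<le>p. real (p-i) * real (p choose i) * c i * x^(i+1) * y^(p-i-1))"
      unfolding p_def by (simp add: sum.atMost_Suc)
    finally show ?thesis .
  qed
  have tm: "c i * (real (p choose i) * (real i * x^(i-1) * y^(p-i) - real (p-i) * x^i * y^(p-i-1)))
     = c i * real i * real (p choose i) * x^(i-1) * y^(p-i+1)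
       - real (p-i) * c i * ?B i + real i * c i * ?B i
       - real (p-i) * real (p choose i) * c i * x^(i+1) * y^(p-i-1)" if "i \<le> p" for i
  proof -
    have h1: "real i * x^(i-1) * x = real i * x^i" by (cases i) simp_all
    have h2: "real (p-i) * y^(p-i-1) * y = real (p-i) * y^(p-i)" by (cases "p-i") simp_all
    have "real i * x^(i-1) * y^(p-i) - real (p-i) * x^i * y^(p-i-1)
        = (real i * x^(i-1) * y^(p-i) - real (p-i) * x^i * y^(p-i-1)) * (x + y)" using xy by simp
    also have "\<dots> = (real i * x^(i-1) * x) * y^(p-i) + real i * x^(i-1) * y^(p-i+1)
         - real (p-i) * x^(i+1) * y^(p-i-1) - x^i * (real (p-i) * y^(p-i-1) * y)"
      by (simp add: algebra_simps)
    also have "\<dots> = real i * x^i * y^(p-i) + real i * x^(i-1) * y^(p-i+1)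
         - real (p-i) * x^(i+1) * y^(p-i-1) - x^i * (real (p-i) * y^(p-i))"
      unfolding h1 h2 ..
    finally have H: "real i * x^(i-1) * y^(p-i) - real (p-i) * x^i * y^(p-i-1) = real i * x^i * y^(p-i) + real i * x^(i-1) * y^(p-i+1)
         - real (p-i) * x^(i+1) * y^(p-i-1) - x^i * (real (p-i) * y^(p-i))" .
    show ?thesis unfolding H by (simp add: algebra_simps)
  qed
  have "(\<Sum>i\<le>p. c i * (real (p choose i) * (real i * x^(i-1) * y^(p-i) - real (p-i) * x^i * y^(p-i-1))))
     = (\<Sum>i\<le>p. c i * real i * real (p choose i) * x^(i-1) * y^(p-i+1))
       - (\<Sum>i\<le>p. real (p-i) * c i * ?B i) + (\<Sum>i\<le>p. real i * c i * ?B i)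
       - (\<Sum>i\<le>p. real (p-i) * real (p choose i) * c i * x^(i+1) * y^(p-i-1))"
  proof -
    have "(\<Sum>i\<le>p. c i * (real (p choose i) * (real i * x^(i-1) * y^(p-i) - real (p-i) * x^i * y^(p-i-1))))
      = (\<Sum>i\<le>p. c i * real i * real (p choose i) * x^(i-1) * y^(p-i+1)
       - real (p-i) * c i * ?B i + real i * c i * ?B i
       - real (p-i) * real (p choose i) * c i * x^(i+1) * y^(p-i-1))"
      by (rule sum.cong[OF refl], rule tm, simp)
    thus ?thesis by (simp only: sum.distrib sum_subtractf)
  qed
  also have "\<dots> = (\<Sum>a\<le>p. real (p-a) * c (Suc a) * ?B a) - (\<Sum>i\<le>p. real (p-i) * c i * ?B i)
       + (\<Sum>i\<le>p. real i * c i * ?B i) - (\<Sum>a\<le>p. real a * c (a-1) * ?B a)"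
    unfolding S1 S3 ..
  also have "\<dots> = (\<Sum>a\<le>p. (real (p-a) * (c (Suc a) - c a) + real a * (c a - c (a-1))) * ?B a)"
    by (simp add: sum_subtractf[symmetric] sum.distrib[symmetric] algebra_simps)
  finally show ?thesis .
qed


lemma bez_DERIV:
  assumes T: "T \<noteq> 0" and p: "p = Suc q"
  shows "DERIV (bez p T c) \<tau> :> bez p T (\<lambda>a. (real (p-a) * (c (Suc a) - c a) + real a * (c a - c (a-1))) / T) \<tau>"
proof -
  let ?x = "\<tau>/T" and ?y = "1 - \<tau>/T"
  have f: "bez p T c = (\<lambda>t. \<Sum>i\<le>p. c i * (real (p choose i) * (t/T)^i * (1 - t/T)^(p-i)))"
    by (simp add: fun_eq_iff bez_def bern_def)
  have d1: "DERIV (bez p T c) \<tau> :> (\<Sum>i\<le>p. c i * (real (p choose i) * (real i * ?x^(i-1) * ?y^(p-i) - real (p-i) * ?x^i * ?y^(p-i-1))) / T)"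
    unfolding f
  proof (rule DERIV_sum)
    fix i assume "i \<in> {..p}"
    show "((\<lambda>t. c i * (real (p choose i) * (t/T)^i * (1 - t/T)^(p-i))) has_field_derivative
       c i * (real (p choose i) * (real i * ?x^(i-1) * ?y^(p-i) - real (p-i) * ?x^i * ?y^(p-i-1))) / T) (at \<tau>)"
      by (rule derivative_eq_intros refl | simp add: T)+ (simp add: field_simps T)
  qed
  have "(\<Sum>i\<le>p. c i * (real (p choose i) * (real i * ?x^(i-1) * ?y^(p-i) - real (p-i) * ?x^i * ?y^(p-i-1))) / T)
     = (\<Sum>i\<le>p. c i * (real (p choose i) * (real i * ?x^(i-1) * ?y^(p-i) - real (p-i) * ?x^i * ?y^(p-i-1)))) / T"
    by (simp add: sum_divide_distrib)
  also have "\<dots> = (\<Sum>a\<le>p. (real (p-a) * (c (Suc a) - c a) + real a * (c a - c (a-1))) * (real (p choose a) * ?x^a * ?y^(p-a))) / T"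
    unfolding p by (subst bern_identity) simp_all
  also have "\<dots> = bez p T (\<lambda>a. (real (p-a) * (c (Suc a) - c a) + real a * (c a - c (a-1))) / T) \<tau>"
    by (simp add: bez_def bern_def sum_divide_distrib mult_ac)
  finally show ?thesis using d1 by simp
qed

lemma Sm_sum: assumes "m < p" shows "(\<Sum>l\<le>p. Sm p m l * d l) = real p * (d (Suc m) - d m)"
proof -
  have "(\<Sum>l\<le>p. Sm p m l * d l) = (\<Sum>l\<le>p. (if l = m then - real p * d m else 0) + (if l = Suc m then real p * d (Suc m) else 0))"
    by (rule sum.cong) (auto simp: Sm_def)
  also have "\<dots> = - real p * d m + real p * d (Suc m)" using assms by (simp add: sum.distrib)
  finally show ?thesis by (simp add: algebra_simps)
qed

lemma ctrl_step:
  assumes "a \<le> p" "0 < p"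
  shows "(\<Sum>m<p. Rm p a m * (\<Sum>l\<le>p. Sm p m l * d l)) / T = (real (p-a) * (d (Suc a) - d a) + real a * (d a - d (a-1))) / T"
proof -
  let ?X = "\<lambda>m. real p * (d (Suc m) - d m)"
  have "(\<Sum>m<p. Rm p a m * (\<Sum>l\<le>p. Sm p m l * d l)) = (\<Sum>m<p. Rm p a m * ?X m)"
    by (rule sum.cong) (auto simp: Sm_sum)
  also have "\<dots> = (\<Sum>m<p. (if m = a then real (p-a) / real p * ?X a else 0) + (if m = a - 1 then (if 0 < a then real a / real p * ?X (a-1) else 0) else 0))"
    by (rule sum.cong) (auto simp: Rm_def)
  also have "\<dots> = real (p-a) / real p * ?X a + real a / real p * ?X (a-1)"
    using assms by (cases "a = p") (auto simp: sum.distrib)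
  also have "\<dots> = real (p-a) * (d (Suc a) - d a) + real a * (d a - d (a-1))"
    using assms by (cases a) (simp_all add: field_simps)
  finally show ?thesis by simp
qed

lemma bez_deriv_ctrl:
  assumes T: "T \<noteq> 0" and p: "0 < p"
  shows "deriv (bez p T (bez_ctrl p T c j)) = bez p T (bez_ctrl p T c (Suc j))"
proof
  fix \<tau>
  obtain q where q: "p = Suc q" using p by (cases p) auto
  have "deriv (bez p T (bez_ctrl p T c j)) \<tau> = bez p T (\<lambda>a. (real (p-a) * (bez_ctrl p T c j (Suc a) - bez_ctrl p T c j a)
      + real a * (bez_ctrl p T c j a - bez_ctrl p T c j (a-1))) / T) \<tau>"
    by (rule DERIV_imp_deriv[OF bez_DERIV[OF T q]])
  also have "\<dots> = bez p T (bez_ctrl p T c (Suc j)) \<tau>"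
    unfolding bez_def using p by (intro sum.cong refl) (simp add: ctrl_step)
  finally show "deriv (bez p T (bez_ctrl p T c j)) \<tau> = bez p T (bez_ctrl p T c (Suc j)) \<tau>" .
qed

lemma bez_derivs:
  assumes T: "T \<noteq> 0" and p: "0 < p"
  shows "(deriv ^^ j) (bez p T c) = bez p T (bez_ctrl p T c j)"
  by (induction j) (simp_all add: bez_deriv_ctrl[OF T p])



lemma bern_nonneg: "0 \<le> \<tau> \<Longrightarrow> \<tau> \<le> T \<Longrightarrow> 0 < T \<Longrightarrow> 0 \<le> bern p T i \<tau>"
  unfolding bern_def by simp

lemma bern_sum: "(\<Sum>i\<le>p. bern p T i \<tau>) = 1"
proof -
  have "(\<tau>/T + (1 - \<tau>/T))^p = (\<Sum>i\<le>p. bern p T i \<tau>)"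
    unfolding binomial_ring bern_def by simp
  thus ?thesis by simp
qed

lemma mono_q:
  fixes xa xb ya yb ma mb mc md na nb G :: real
  assumes "0 \<le> xa" "xa \<le> ya" "0 \<le> xb" "xb \<le> yb" "0 \<le> ma" "0 \<le> mb" "0 \<le> mc" "0 \<le> md" "0 \<le> na" "0 \<le> nb"
  shows "1/2*(xa*xa*ma + xa*xb*(mb+mc) + xb*xb*md) + (na*xa + nb*xb) + G \<le> 1/2*(ya*ya*ma + ya*yb*(mb+mc) + yb*yb*md) + (na*ya + nb*yb) + G"
proof -
  have h: "xa*xa \<le> ya*ya" "xa*xb \<le> ya*yb" "xb*xb \<le> yb*yb" using assms by (auto intro: mult_mono)
  have h1: "xa*xa*ma \<le> ya*ya*ma" "xa*xb*(mb+mc) \<le> ya*yb*(mb+mc)" "xb*xb*md \<le> yb*yb*md"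
    using assms h by (auto intro: mult_right_mono)
  have h2: "na*xa \<le> na*ya" "nb*xb \<le> nb*yb" using assms by (auto intro: mult_left_mono)
  have A: "xa*xa*ma + xa*xb*(mb+mc) + xb*xb*md \<le> ya*ya*ma + ya*yb*(mb+mc) + yb*yb*md"
    using h1 by (meson add_mono)
  have B: "na*xa + nb*xb \<le> na*ya + nb*yb" using h2 by (meson add_mono)
  have gen: "\<And>P P' Q Q'. (P::real) \<le> P' \<Longrightarrow> Q \<le> Q' \<Longrightarrow> 1/2*P + Q + G \<le> 1/2*P' + Q' + G" by linarith
  show ?thesis by (rule gen[OF A B])
qed

lemma quadf_expand: "quadf M Nv G (z::real^2) = 1/2*(z$1*z$1*M$1$1 + z$1*z$2*(M$1$2+M$2$1) + z$2*z$2*M$2$2) + (Nv$1*z$1 + Nv$2*z$2) + G"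
  unfolding quadf_def quad22 by (simp add: inner_vec_def sum_2)

lemma quadf_mono:
  assumes "0 \<le> Mab a b $1$1" "0 \<le> Mab a b $1$2" "0 \<le> Mab a b $2$1" "0 \<le> Mab a b $2$2"
    "0 \<le> Nv$1" "0 \<le> Nv$2" "0 \<le> x" "x \<le> s$1" "0 \<le> y" "y \<le> s$2"
  shows "quadf (Mab a b) Nv G (vector [x, y]) \<le> quadf (Mab a b) Nv G s"
  unfolding quadf_expand using assms by (intro mono_q) simp_all

lemma rvec_conv:
  assumes T: "T \<noteq> 0" and p: "0 < p"
  shows "(rvec p T c \<tau> :: real^'n::{finite,linorder}) = (\<Sum>a\<le>p. bern p T a \<tau> *\<^sub>R zeta p T c a)"
  unfolding rvec_def zeta_def bez_derivs[OF T p]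
  by (simp add: vec_eq_iff sum_component bez_def mult.commute)



theorem lemma6:
  fixes f g :: "real^('n::{finite,linorder}) \<Rightarrow> real"
    and X :: "(real^('n::{finite,linorder})) set"
    and K :: "real^('n::{finite,linorder})" and P Q :: "real^('n::{finite,linorder})^('n::{finite,linorder})" and wb :: real
    and N :: nat and T tlo :: real
    and xs :: "nat \<Rightarrow> real^('n::{finite,linorder})" and xi :: "nat \<Rightarrow> nat \<Rightarrow> real"
    and \<alpha> \<beta> umax :: real and xb :: "nat \<Rightarrow> real^('n::{finite,linorder})"
  defines "n \<equiv> CARD('n)"
    and "p \<equiv> 2 * CARD('n) - 1"
    and "e \<equiv> ebar P Q wb"
  assumes f_C1: "C1 f" and g_C1: "C1 g" and f0: "f 0 = 0" and g_nz: "\<forall>x. g x \<noteq> 0"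
    and X_poly: "polytope X" and X_0: "0 \<in> interior X"
    and K_hurwitz: "hurwitz (Fmat K)"
    and Q_pd: "pos_def Q" and P_pd: "pos_def P"
    and lyap: "transpose (Fmat K) ** P + P ** Fmat K = - Q"
    and wb_nn: "wb \<ge> 0"
    and T_pos: "T > 0" and tlo_nn: "tlo \<ge> 0"
    and bez_start: "\<forall>k<N. \<forall>c. (deriv ^^ cpos c) (bez p T (xi k)) 0 = xs k $ c"
    and bez_end: "\<forall>k<N. \<forall>c. (deriv ^^ cpos c) (bez p T (xi k)) T = xs (Suc k) $ c"
    and ab: "\<alpha> \<ge> 0" "\<beta> \<ge> 0" and umax_pos: "umax > 0"
    and xb_X: "\<forall>k<N. xb k \<in> X"
    and hyp: "\<forall>k<N. \<exists>s::real^2. s$1 \<ge> 0 \<and> s$2 \<ge> 0 \<and>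
       (\<forall>i\<le>p. norm (zeta p T (xi k) i - xb k) \<le> s$1 \<and>
                \<bar>bez_ctrl p T (xi k) n i - f (xb k)\<bar> \<le> s$2) \<and>
       quadf (Mab \<alpha> \<beta>) (Nab \<alpha> \<beta> e (norm K) (g (xb k))) (Gab \<alpha> \<beta> e (norm K) (g (xb k))) s
         \<le> umax"
  shows "\<forall>k<N. \<forall>t. tlo + real k * T \<le> t \<and> t < tlo + real (Suc k) * T \<longrightarrow>
     quadf (Mab \<alpha> \<beta>) (Nab \<alpha> \<beta> e (norm K) (g (xb k))) (Gab \<alpha> \<beta> e (norm K) (g (xb k)))
       (vector [norm (xd N T tlo xs xi t - xb k),
                \<bar>(deriv ^^ n) (bez p T (xi k)) (t - (tlo + real k * T)) - f (xb k)\<bar>])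
     \<le> umax"
proof (intro allI impI)
  fix k t assume k: "k < N" and t: "tlo + real k * T \<le> t \<and> t < tlo + real (Suc k) * T"
  define \<tau> where "\<tau> = t - (tlo + real k * T)"
  have \<tau>0: "0 \<le> \<tau>" using t by (simp add: \<tau>_def)
  have \<tau>T: "\<tau> \<le> T" using t by (simp add: \<tau>_def algebra_simps)
  have T0: "T \<noteq> 0" using T_pos by simp
  have c0: "0 < CARD('n)" by simp
  have p0: "0 < p" unfolding p_def using c0 by linarith
  obtain s :: "real^2" where s1: "s$1 \<ge> 0" and s2: "s$2 \<ge> 0"
    and sb: "\<And>i. i \<le> p \<Longrightarrow> norm (zeta p T (xi k) i - xb k) \<le> s$1 \<and>
                \<bar>bez_ctrl p T (xi k) n i - f (xb k)\<bar> \<le> s$2"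
    and sq: "quadf (Mab \<alpha> \<beta>) (Nab \<alpha> \<beta> e (norm K) (g (xb k))) (Gab \<alpha> \<beta> e (norm K) (g (xb k))) s \<le> umax"
    using hyp k by blast
  have notend: "\<not> (t \<ge> tlo + real N * T)"
  proof -
    have "real (Suc k) \<le> real N" using k by simp
    hence "real (Suc k) * T \<le> real N * T" using T_pos by (intro mult_right_mono) simp_all
    thus ?thesis using t by linarith
  qed
  have fl: "nat \<lfloor>(t - tlo) / T\<rfloor> = k"
  proof -
    have "real k \<le> (t - tlo) / T" using t T_pos by (simp add: pos_le_divide_eq algebra_simps)
    moreover have "(t - tlo) / T < real k + 1" using t T_pos by (simp add: pos_divide_less_eq algebra_simps)
    ultimately have "\<lfloor>(t - tlo) / T\<rfloor> = int k" by (intro floor_unique) simp_all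
    thus ?thesis by simp
  qed
  have xdk: "xd N T tlo xs xi t = rvec p T (xi k) \<tau>"
    unfolding xd_def Let_def fl p_def \<tau>_def using notend by simp
  have bs: "(\<Sum>a\<le>p. bern p T a \<tau>) = 1" by (rule bern_sum)
  have bn: "\<And>a. 0 \<le> bern p T a \<tau>" using \<tau>0 \<tau>T T_pos by (intro bern_nonneg)
  have sig1: "norm (xd N T tlo xs xi t - xb k) \<le> s$1"
  proof -
    have "xd N T tlo xs xi t - xb k = (\<Sum>a\<le>p. bern p T a \<tau> *\<^sub>R zeta p T (xi k) a) - (\<Sum>a\<le>p. bern p T a \<tau>) *\<^sub>R xb k"
      unfolding xdk rvec_conv[OF T0 p0] bs by simp
    also have "\<dots> = (\<Sum>a\<le>p. bern p T a \<tau> *\<^sub>R (zeta p T (xi k) a - xb k))"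
      by (simp add: scaleR_sum_left scaleR_diff_right sum_subtractf)
    finally have H: "xd N T tlo xs xi t - xb k = (\<Sum>a\<le>p. bern p T a \<tau> *\<^sub>R (zeta p T (xi k) a - xb k))" .
    have "norm (xd N T tlo xs xi t - xb k) \<le> (\<Sum>a\<le>p. norm (bern p T a \<tau> *\<^sub>R (zeta p T (xi k) a - xb k)))"
      unfolding H by (rule norm_sum)
    also have "\<dots> \<le> (\<Sum>a\<le>p. bern p T a \<tau> * s$1)"
      using bn sb by (intro sum_mono) (simp add: mult_left_mono)
    also have "\<dots> = s$1" by (simp add: sum_distrib_right[symmetric] bs)
    finally show ?thesis .
  qed
  have sig2: "\<bar>(deriv ^^ n) (bez p T (xi k)) \<tau> - f (xb k)\<bar> \<le> s$2"
  proof -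
    have "(deriv ^^ n) (bez p T (xi k)) \<tau> - f (xb k) = (\<Sum>a\<le>p. bern p T a \<tau> * (bez_ctrl p T (xi k) n a - f (xb k)))"
    proof -
      have "(\<Sum>a\<le>p. bern p T a \<tau> * (bez_ctrl p T (xi k) n a - f (xb k)))
          = (\<Sum>a\<le>p. bez_ctrl p T (xi k) n a * bern p T a \<tau>) - (\<Sum>a\<le>p. bern p T a \<tau>) * f (xb k)"
        by (simp add: right_diff_distrib sum_subtractf sum_distrib_right sum_distrib_left mult.commute)
      thus ?thesis unfolding bez_derivs[OF T0 p0] bez_def bs by simp
    qed
    hence "\<bar>(deriv ^^ n) (bez p T (xi k)) \<tau> - f (xb k)\<bar> \<le> (\<Sum>a\<le>p. \<bar>bern p T a \<tau> * (bez_ctrl p T (xi k) n a - f (xb k))\<bar>)"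
      by (simp add: sum_abs)
    also have "\<dots> \<le> (\<Sum>a\<le>p. bern p T a \<tau> * s$2)"
      using bn sb by (intro sum_mono) (simp add: abs_mult mult_left_mono)
    also have "\<dots> = s$2" by (simp add: sum_distrib_right[symmetric] bs)
    finally show ?thesis .
  qed
  have e0: "e \<ge> 0" unfolding e_def by (rule ebar_nn[OF P_pd])
  have Mp: "0 \<le> Mab \<alpha> \<beta> $1$1 \<and> 0 \<le> Mab \<alpha> \<beta> $1$2 \<and> Mab \<alpha> \<beta> $2$1 = Mab \<alpha> \<beta> $1$2 \<and> 0 \<le> Mab \<alpha> \<beta> $2$2"
    using Mab_props[OF ab] .
  have N1: "0 \<le> Nab \<alpha> \<beta> e (norm K) (g (xb k)) $ 1" using ab e0 by (simp add: Nab_def)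
  have N2: "0 \<le> Nab \<alpha> \<beta> e (norm K) (g (xb k)) $ 2" using ab e0 by (simp add: Nab_def)
  have "quadf (Mab \<alpha> \<beta>) (Nab \<alpha> \<beta> e (norm K) (g (xb k))) (Gab \<alpha> \<beta> e (norm K) (g (xb k)))
       (vector [norm (xd N T tlo xs xi t - xb k),
                \<bar>(deriv ^^ n) (bez p T (xi k)) (t - (tlo + real k * T)) - f (xb k)\<bar>])
     \<le> quadf (Mab \<alpha> \<beta>) (Nab \<alpha> \<beta> e (norm K) (g (xb k))) (Gab \<alpha> \<beta> e (norm K) (g (xb k))) s"
    using Mp N1 N2 sig1 sig2 unfolding \<tau>_def by (intro quadf_mono) simp_all
  thus "quadf (Mab \<alpha> \<beta>) (Nab \<alpha> \<beta> e (norm K) (g (xb k))) (Gab \<alpha> \<beta> e (norm K) (g (xb k)))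
       (vector [norm (xd N T tlo xs xi t - xb k),
                \<bar>(deriv ^^ n) (bez p T (xi k)) (t - (tlo + real k * T)) - f (xb k)\<bar>])
     \<le> umax" using sq by linarith
qed

end
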